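(* Under Algorithm 2(a) below, for every slot $t$, the rows of $H(t)$ are linearly independent, where $H(t)$ is the matrix whose rows are the global coefficient vectors (in $\mathbb{F}_q^{A(t)}$, with respect to the original packet stream, $A(t)$ being the number of arrivals up to and including slot $t$) of the sender's queue contents at the end of Step 3 of slot $t$.
   Context: Setting: a sender broadcasts to $n$ receivers over a slotted packet erasure broadcast channel with perfect feedback; packets are vectors over $\mathbb{F}_q$, indexed by arrival order. Algorithm 2(a) ($q>n$): The sender stores queue contents $\mathbf{y}_1,\dots,\mathbf{y}_Q$ (linear combinations of original packets) and matrices $B,B_1,\dots,B_n$ with $Q$ columns whose rows are local coefficient vectors with respect to the current queue; initially all empty. Each slot: (Step 3) append the $a$ arriving packets to the queue, set $B=I_Q$ for the new $Q$, append $a$ zero columns to each $B_j$. (Step 4) If the queue is nonempty, choose $\mathbf{g}\in\mathrm{span}(B)$ with $\mathbf{g}\notin\mathrm{span}(B_j)$ for all $j$ with $\mathrm{span}(B_j)\ne\mathrm{span}(B)$ (row spaces), and transmit $\sum_ig_i\mathbf{y}_i$; else $\mathbf{g}=\mathbf{0}$. (Step 5) If $\mathbf{g}\ne\mathbf{0}$ and receiver $j$ received it, append $\mathbf{g}$ as a row of $B_j$. (Step 6) Let $B_\Delta$ be a basis of $\bigcap_j\mathrm{span}(B_j)$, $B'$ a completion of $B_\Delta$ into a basis of $\mathrm{span}(B)$, $B''=B'\setminus B_\Delta$, and $B_j'$ a completion of $B_\Delta$ into a basis of $\mathrm{span}(B_j)$ with $B_j'':=B_j'\setminus B_\Delta\subseteq\mathrm{span}(B'')$.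 (Step 7) Replace the queue contents by the packets $\sum_ih_i\mathbf{y}_i$ for $\mathbf{h}\in B''$. (Step 8) Replace $B_j$ by $X_j$ where $B_j''=X_jB''$; set $B=I_{|B''|}$. *)

theory Defs
  imports Main
begin

text \<open>Vectors over the field are functions nat \<Rightarrow> 'a; the space F^Q is the set of
  vectors vanishing at every index \<ge> Q (index i corresponds to the (i+1)-th coordinate).
  A matrix is the list of its rows.  Appending zero columns is then the identity.\<close>

definition fullspace :: "nat \<Rightarrow> (nat \<Rightarrow> 'a::zero) set" where
  "fullspace Q = {v. \<forall>i\<ge>Q. v i = 0}"

definition comb :: "(nat \<Rightarrow> 'a::comm_ring_1) \<Rightarrow> (nat \<Rightarrow> 'a) list \<Rightarrow> nat \<Rightarrow> 'a" where
  "comb c vs = (\<lambda>i. \<Sum>k<length vs. c k * (vs ! k) i)"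

definition rspan :: "(nat \<Rightarrow> 'a::comm_ring_1) list \<Rightarrow> (nat \<Rightarrow> 'a) set" where
  "rspan vs = range (\<lambda>c. comb c vs)"

definition rlin_indep :: "(nat \<Rightarrow> 'a::comm_ring_1) list \<Rightarrow> bool" where
  "rlin_indep vs \<longleftrightarrow> (\<forall>c. comb c vs = (\<lambda>i. 0) \<longrightarrow> (\<forall>k<length vs. c k = 0))"

definition is_basis :: "(nat \<Rightarrow> 'a::comm_ring_1) list \<Rightarrow> (nat \<Rightarrow> 'a) set \<Rightarrow> bool" where
  "is_basis vs S \<longleftrightarrow> rlin_indep vs \<and> rspan vs = S"

definition unitv :: "nat \<Rightarrow> nat \<Rightarrow> 'a::comm_ring_1" where
  "unitv k = (\<lambda>i. if i = k then 1 else 0)"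

text \<open>Sender state: (A, Y, Bs) where A = number of arrivals so far, Y = list of the
  global coefficient vectors (in F^A) of the queue contents y_1..y_Q, and Bs j = rows of B_j.\<close>
type_synonym 'a state = "nat \<times> (nat \<Rightarrow> 'a) list \<times> (nat \<Rightarrow> (nat \<Rightarrow> 'a) list)"

text \<open>Step 3 with a arriving packets (packets A+1..A+a, whose global coefficient vectors are unit vectors).
  B := I_Q is implicit (span B = F^Q); appending zero columns to B_j does not change B_j in this representation.\<close>
definition step3 :: "nat \<Rightarrow> 'a::comm_ring_1 state \<Rightarrow> 'a state" where
  "step3 a s = (case s of (A, Y, Bs) \<Rightarrow>
     (A + a, Y @ map (\<lambda>i. unitv (A + i)) [0..<a], Bs))"

text \<open>Steps 4--8 of Algorithm 2(a), as a relation (all choices of the sender and all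
  reception patterns of the erasure channel are allowed).\<close>
definition steps4to8 :: "nat \<Rightarrow> 'a::field state \<Rightarrow> 'a state \<Rightarrow> bool" where
  "steps4to8 n s s' \<longleftrightarrow> (case s of (A, Y, Bs) \<Rightarrow> case s' of (A', Y', Bs') \<Rightarrow>
     A' = A \<and>
     (\<exists>g R BD B2 C X.
        (let Q = length Y;
             Bs1 = (\<lambda>j. if g \<noteq> (\<lambda>i. 0) \<and> j \<in> R then Bs j @ [g] else Bs j)
         in
        \<comment> \<open>Step 4\<close>
        (if Q = 0 then g = (\<lambda>i. 0)
         else g \<in> fullspace Q \<and> (\<forall>j<n. rspan (Bs j) \<noteq> fullspace Q \<longrightarrow> g \<notin> rspan (Bs j))) \<and>
        \<comment> \<open>Step 5: R = set of receivers that received the packet\<close>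
        R \<subseteq> {..<n} \<and>
        \<comment> \<open>Step 6\<close>
        is_basis BD (fullspace Q \<inter> (\<Inter>j\<in>{..<n}. rspan (Bs1 j))) \<and>
        is_basis (BD @ B2) (fullspace Q) \<and>
        (\<forall>j<n. is_basis (BD @ C j) (rspan (Bs1 j)) \<and> set (C j) \<subseteq> rspan B2) \<and>
        \<comment> \<open>Step 7\<close>
        Y' = map (\<lambda>h. comb h Y) B2 \<and>
        \<comment> \<open>Step 8: B_j'' = X_j B''\<close>
        (\<forall>j<n. length (X j) = length (C j) \<and>
           (\<forall>k<length (C j). X j ! k \<in> fullspace (length B2) \<and> C j ! k = comb (X j ! k) B2)) \<and>
        Bs' = (\<lambda>j. if j < n then X j else []))))"

inductive after_step3 :: "nat \<Rightarrow> 'a::field state \<Rightarrow> bool" for n where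
  first: "after_step3 n (step3 a (0, [], (\<lambda>j. [])))"
| step: "after_step3 n s \<Longrightarrow> steps4to8 n s s' \<Longrightarrow> after_step3 n (step3 a s')"

end

theory Submission
  imports Defs
begin

lemma sum_lessThan_add_split:
  fixes f :: "nat \<Rightarrow> 'b::comm_monoid_add"
  shows "(\<Sum>k<a+b. f k) = (\<Sum>k<a. f k) + (\<Sum>k<b. f (a+k))"
  by (induction b) (simp_all add: add.assoc)

lemma comb_append:
  "comb c (xs @ ys) = (\<lambda>i. comb c xs i + comb (\<lambda>m. c (length xs + m)) ys i)"
  unfolding comb_def
  by (rule ext) (simp add: sum_lessThan_add_split nth_append)

lemma comb_map_comb:
  fixes Y :: "(nat \<Rightarrow> 'a::comm_ring_1) list"
  shows "comb c (map (\<lambda>h. comb h Y) B) = comb (comb c B) Y"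
proof (rule ext)
  fix i
  have "comb c (map (\<lambda>h. comb h Y) B) i = (\<Sum>m<length B. c m * (\<Sum>k<length Y. (B!m) k * (Y!k) i))"
    by (simp add: comb_def)
  also have "\<dots> = (\<Sum>m<length B. \<Sum>k<length Y. c m * (B!m) k * (Y!k) i)"
    by (simp add: sum_distrib_left mult.assoc)
  also have "\<dots> = (\<Sum>k<length Y. \<Sum>m<length B. c m * (B!m) k * (Y!k) i)"
    by (rule sum.swap)
  also have "\<dots> = comb (comb c B) Y i"
    by (simp add: comb_def sum_distrib_right)
  finally show "comb c (map (\<lambda>h. comb h Y) B) i = comb (comb c B) Y i" .
qed

lemma comb_fullspace:
  assumes "set vs \<subseteq> fullspace Q"
  shows "comb c vs \<in> fullspace Q"
proof -
  have "comb c vs i = 0" if "i \<ge> Q" for i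
    unfolding comb_def
  proof (rule sum.neutral, rule ballI)
    fix x assume "x \<in> {..<length vs}"
    then have "vs ! x \<in> fullspace Q" using assms nth_mem by blast
    then show "c x * (vs ! x) i = 0" using that by (simp add: fullspace_def)
  qed
  then show ?thesis by (simp add: fullspace_def)
qed

lemma nth_in_rspan:
  assumes "k < length vs"
  shows "vs ! k \<in> rspan vs"
proof -
  have "comb (unitv k) vs = vs ! k"
  proof (rule ext)
    fix i
    have "comb (unitv k) vs i = (\<Sum>m<length vs. if m = k then (vs ! m) i else 0)"
      unfolding comb_def unitv_def by (intro sum.cong) auto
    also have "\<dots> = (vs ! k) i" using assms by (simp add: sum.delta)
    finally show "comb (unitv k) vs i = (vs ! k) i" .
  qed
  then show ?thesis unfolding rspan_def by (metis rangeI)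
qed

lemma indep_zero:
  assumes "rlin_indep Y" "v \<in> fullspace (length Y)" "comb v Y = (\<lambda>i. 0)"
  shows "v = (\<lambda>i. 0)"
proof (rule ext)
  fix i
  show "v i = 0"
  proof (cases "i < length Y")
    case True then show ?thesis using assms(1,3) unfolding rlin_indep_def by blast
  next
    case False then show ?thesis using assms(2) unfolding fullspace_def by simp
  qed
qed

definition inv3 :: "'a::field state \<Rightarrow> bool" where
  "inv3 s = (case s of (A, Y, Bs) \<Rightarrow> rlin_indep Y \<and> set Y \<subseteq> fullspace A)"

lemma unitv_fullspace: "i < a \<Longrightarrow> unitv (A + i) \<in> fullspace (A + a)"
  by (simp add: unitv_def fullspace_def)

lemma step3_inv:
  assumes "inv3 (A, Y, Bs)"
  shows "inv3 (step3 a (A, Y, Bs))"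
proof -
  let ?U = "map (\<lambda>i. unitv (A + i)) [0..<a] :: (nat \<Rightarrow> 'a) list"
  have iY: "rlin_indep Y" and fY: "set Y \<subseteq> fullspace A" using assms by (auto simp: inv3_def)
  have fs: "set (Y @ ?U) \<subseteq> fullspace (A + a)"
    using fY by (auto simp: fullspace_def unitv_def subset_iff)
  have ind: "rlin_indep (Y @ ?U)"
    unfolding rlin_indep_def
  proof (rule allI, rule impI)
    fix c assume z: "comb c (Y @ ?U) = (\<lambda>i. 0)"
    let ?d = "\<lambda>m. c (length Y + m)"
    have cz: "comb c Y (A + j) = 0" for j
      using fY comb_fullspace[of Y A c] by (auto simp: fullspace_def)
    have uval: "comb ?d ?U (A + j) = ?d j" if "j < a" for j
    proof -
      have "comb ?d ?U (A + j) = (\<Sum>m<a. ?d m * (if j = m then 1 else 0))"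
        by (simp add: comb_def unitv_def)
      also have "\<dots> = (\<Sum>m<a. if j = m then ?d m else 0)" by (intro sum.cong) auto
      also have "\<dots> = ?d j" using that by (simp add: sum.delta')
      finally show ?thesis .
    qed
    have dz: "?d j = 0" if "j < a" for j
      using fun_cong[OF z, of "A + j"] cz[of j] uval[OF that]
      by (simp add: comb_append)
    have "comb ?d ?U = (\<lambda>i. 0)"
      unfolding comb_def using dz by (auto intro!: ext sum.neutral)
    then have "comb c Y = (\<lambda>i. 0)"
      using z by (auto simp: comb_append fun_eq_iff)
    then have yz: "\<forall>k<length Y. c k = 0" using iY by (simp add: rlin_indep_def)
    show "\<forall>k<length (Y @ ?U). c k = 0"
    proof (intro allI impI)
      fix k assume "k < length (Y @ ?U)"
      show "c k = 0"
      proof (cases "k < length Y")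
        case True then show ?thesis using yz by blast
      next
        case False
        then have "k - length Y < a" using \<open>k < length (Y @ ?U)\<close> by simp
        then have "c (length Y + (k - length Y)) = 0" by (rule dz)
        then show ?thesis using False by simp
      qed
    qed
  qed
  show ?thesis unfolding step3_def inv3_def prod.case using ind fs by (rule conjI)
qed

lemma steps_inv:
  assumes "inv3 s" "steps4to8 n s s'"
  shows "inv3 s'"
proof -
  obtain A Y Bs where s: "s = (A, Y, Bs)" by (cases s) auto
  obtain A' Y' Bs' where s': "s' = (A', Y', Bs')" by (cases s') auto
  have iY: "rlin_indep Y" and fY: "set Y \<subseteq> fullspace A" using assms(1) s by (auto simp: inv3_def)
  from assms(2) s s' obtain BD B2 where AA: "A' = A"
    and bas: "is_basis (BD @ B2) (fullspace (length Y))"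
    and Y': "Y' = map (\<lambda>h. comb h Y) B2"
    unfolding steps4to8_def Let_def by auto
  have ib: "rlin_indep (BD @ B2)" and sp: "rspan (BD @ B2) = fullspace (length Y)"
    using bas by (auto simp: is_basis_def)
  have ib'': "\<And>c. comb c (BD @ B2) = (\<lambda>i. 0) \<Longrightarrow> \<forall>k<length (BD @ B2). c k = 0"
    using ib unfolding rlin_indep_def by blast
  have B2f: "set B2 \<subseteq> fullspace (length Y)"
  proof
    fix x assume "x \<in> set B2"
    then obtain m where m: "m < length B2" "x = B2 ! m" by (auto simp: in_set_conv_nth)
    have "(BD @ B2) ! (length BD + m) \<in> rspan (BD @ B2)"
      by (rule nth_in_rspan) (use m in simp)
    then show "x \<in> fullspace (length Y)" using m sp by simp
  qed
  have fY': "set Y' \<subseteq> fullspace A'"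
    using Y' AA comb_fullspace[OF fY] by auto
  have iY': "rlin_indep Y'"
    unfolding rlin_indep_def
  proof (rule allI, rule impI)
    fix c assume z: "comb c Y' = (\<lambda>i. 0)"
    have "comb (comb c B2) Y = comb c Y'" unfolding Y' by (rule comb_map_comb[symmetric])
    then have "comb (comb c B2) Y = (\<lambda>i. 0)" using z by simp
    then have cb: "comb c B2 = (\<lambda>i. 0)"
      using indep_zero[OF iY comb_fullspace[OF B2f]] by blast
    let ?c' = "\<lambda>k. if k < length BD then 0 else c (k - length BD)"
    have "comb ?c' BD = (\<lambda>i. 0)" by (simp add: comb_def)
    then have "comb ?c' (BD @ B2) = (\<lambda>i. 0)"
      using cb by (simp add: comb_append)
    then have h: "\<forall>k<length (BD @ B2). ?c' k = 0" by (rule ib'')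
    show "\<forall>k<length Y'. c k = 0"
    proof (intro allI impI)
      fix k assume "k < length Y'"
      then have "k < length B2" using Y' by simp
      then have "length BD + k < length (BD @ B2)" by simp
      then have "?c' (length BD + k) = 0" by (rule h[rule_format])
      then show "c k = 0" by simp
    qed
  qed
  show ?thesis unfolding s' inv3_def prod.case using iY' fY' by (rule conjI)
qed

lemma after_inv: "after_step3 n s \<Longrightarrow> inv3 s"
proof (induction rule: after_step3.induct)
  case (first a)
  have "inv3 ((0::nat), [] :: (nat \<Rightarrow> 'a::field) list, (\<lambda>j::nat. [] :: (nat \<Rightarrow> 'a) list))"
    by (simp add: inv3_def rlin_indep_def)
  then show ?case by (rule step3_inv)
next
  case (step s s' a)
  have "inv3 s'" using step.IH step.hyps(2) by (rule steps_inv)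
  then show ?case by (cases s') (simp add: step3_inv)
qed

theorem lemma3:
  fixes n :: nat and A :: nat and H :: "(nat \<Rightarrow> 'a::{finite,field}) list"
    and Bs :: "nat \<Rightarrow> (nat \<Rightarrow> 'a) list"
  assumes "card (UNIV :: 'a set) > n"
    and "after_step3 n (A, H, Bs)"
  shows "rlin_indep H"
  using after_inv[OF assms(2)] by (simp add: inv3_def)

end
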